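(* Let $S$ be a semidomain. The following are equivalent: (a) $S$ is an FFS; (b) $S[x]$ is an FFS; (c) $S[x^{\pm1}]$ is an FFS.
   Context: A semidomain is a subset $S$ of an integral domain $R$ containing $0$ and $1$ and closed under addition and multiplication; $S^*=S\setminus\{0\}$ is a monoid under multiplication, with units forming $S^\times$; $b,c\in S^*$ are associates if each divides the other in $S^*$. An atom is a nonunit $a\in S^*$ such that $a=bc$ with $b,c\in S^*$ forces $b$ or $c$ to be a unit; $S$ is atomic if every nonunit of $S^*$ is a finite product of atoms. $S$ is a finite factorization semidomain (FFS) if $S$ is atomic and every element of $S^*$ has only finitely many factorizations into atoms, where factorizations are considered up to order and associates of the atoms (equivalently, every element of $S^*$ has only finitely many divisors in $S^*$ up to associates). $S[x]$ (resp. $S[x^{\pm1}]$) is the semidomain of polynomials (resp. Laurent polynomials) in $R[x]$ (resp. $R[x^{\pm1}]$) with coefficients in $S$. *)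

theory Defs
  imports "HOL-Computational_Algebra.Polynomial" "HOL-Computational_Algebra.Formal_Laurent_Series"
begin

definition semidomain :: "'a::idom set \<Rightarrow> bool" where
  "semidomain S \<longleftrightarrow> 0 \<in> S \<and> 1 \<in> S \<and>
     (\<forall>a\<in>S. \<forall>b\<in>S. a + b \<in> S) \<and> (\<forall>a\<in>S. \<forall>b\<in>S. a * b \<in> S)"

definition sd_star :: "'a::idom set \<Rightarrow> 'a set" where
  "sd_star S = S - {0}"

definition sd_dvd :: "'a::idom set \<Rightarrow> 'a \<Rightarrow> 'a \<Rightarrow> bool" where
  "sd_dvd S b c \<longleftrightarrow> b \<in> sd_star S \<and> c \<in> sd_star S \<and> (\<exists>d\<in>sd_star S. c = b * d)"

definition sd_unit :: "'a::idom set \<Rightarrow> 'a \<Rightarrow> bool" where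
  "sd_unit S u \<longleftrightarrow> u \<in> sd_star S \<and> (\<exists>v\<in>sd_star S. u * v = 1)"

definition sd_assoc :: "'a::idom set \<Rightarrow> 'a \<Rightarrow> 'a \<Rightarrow> bool" where
  "sd_assoc S b c \<longleftrightarrow> sd_dvd S b c \<and> sd_dvd S c b"

definition sd_atom :: "'a::idom set \<Rightarrow> 'a \<Rightarrow> bool" where
  "sd_atom S a \<longleftrightarrow> a \<in> sd_star S \<and> \<not> sd_unit S a \<and>
     (\<forall>b\<in>sd_star S. \<forall>c\<in>sd_star S. a = b * c \<longrightarrow> sd_unit S b \<or> sd_unit S c)"

definition sd_atomic :: "'a::idom set \<Rightarrow> bool" where
  "sd_atomic S \<longleftrightarrow> (\<forall>a\<in>sd_star S. \<not> sd_unit S a \<longrightarrow>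
     (\<exists>xs. xs \<noteq> [] \<and> (\<forall>x\<in>set xs. sd_atom S x) \<and> prod_list xs = a))"

text \<open>Factorizations of a (lists of atoms with product a), and their identification
  up to order and associates.\<close>
definition sd_factorizations :: "'a::idom set \<Rightarrow> 'a \<Rightarrow> 'a list set" where
  "sd_factorizations S a = {xs. (\<forall>x\<in>set xs. sd_atom S x) \<and> prod_list xs = a}"

definition sd_fact_equiv :: "'a::idom set \<Rightarrow> ('a list \<times> 'a list) set" where
  "sd_fact_equiv S = {(xs, ys). \<exists>zs. mset zs = mset ys \<and> list_all2 (sd_assoc S) xs zs}"

definition FFS :: "'a::idom set \<Rightarrow> bool" where
  "FFS S \<longleftrightarrow> sd_atomic S \<and>
     (\<forall>a\<in>sd_star S. finite (sd_factorizations S a // sd_fact_equiv S))"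

definition poly_semidomain :: "'a::idom set \<Rightarrow> 'a poly set" where
  "poly_semidomain S = {p. \<forall>n. coeff p n \<in> S}"

text \<open>S[x^{+-1}]: Laurent polynomials (formal Laurent series with finite support)
  with coefficients in S.\<close>
definition laurent_semidomain :: "'a::idom set \<Rightarrow> 'a fls set" where
  "laurent_semidomain S =
     {f. finite {n. fls_nth f n \<noteq> 0} \<and> (\<forall>n. fls_nth f n \<in> S)}"

end

theory Submission
  imports Defs "HOL-Computational_Algebra.Fraction_Field" "HOL-Computational_Algebra.Field_as_Ring"
    "HOL-Computational_Algebra.Polynomial_Factorial" "HOL-Computational_Algebra.Polynomial_FPS"
begin


instantiation fract ::
  (idom) "{unique_euclidean_ring, normalization_euclidean_semiring, normalization_semidom_multiplicative}"
begin

definition [simp]: "normalize_fract = (normalize_field :: 'a fract \<Rightarrow> _)"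
definition [simp]: "unit_factor_fract = (unit_factor_field :: 'a fract \<Rightarrow> _)"
definition [simp]: "modulo_fract = (mod_field :: 'a fract \<Rightarrow> _)"
definition [simp]: "euclidean_size_fract = (euclidean_size_field :: 'a fract \<Rightarrow> _)"
definition [simp]: "division_segment (x :: 'a fract) = 1"

instance
  by standard
    (simp_all add: dvd_field_iff field_split_simps split: if_splits)

end

instantiation fract :: (idom) euclidean_ring_gcd
begin

definition gcd_fract :: "'a fract \<Rightarrow> 'a fract \<Rightarrow> 'a fract" where
  "gcd_fract = Euclidean_Algorithm.gcd"
definition lcm_fract :: "'a fract \<Rightarrow> 'a fract \<Rightarrow> 'a fract" where
  "lcm_fract = Euclidean_Algorithm.lcm"
definition Gcd_fract :: "'a fract set \<Rightarrow> 'a fract" where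
 "Gcd_fract = Euclidean_Algorithm.Gcd"
definition Lcm_fract :: "'a fract set \<Rightarrow> 'a fract" where
 "Lcm_fract = Euclidean_Algorithm.Lcm"

instance by standard (simp_all add: gcd_fract_def lcm_fract_def Gcd_fract_def Lcm_fract_def)

end

instance fract :: (idom) field_gcd ..





locale sdom =
  fixes T :: "'a::idom set"
  assumes sd: "semidomain T"
begin

lemma zero_in: "0 \<in> T" and one_in: "1 \<in> T"
  and add_in: "a \<in> T \<Longrightarrow> b \<in> T \<Longrightarrow> a + b \<in> T"
  and mult_in: "a \<in> T \<Longrightarrow> b \<in> T \<Longrightarrow> a * b \<in> T"
  using sd unfolding semidomain_def by auto

lemma star_iff: "x \<in> sd_star T \<longleftrightarrow> x \<in> T \<and> x \<noteq> 0"
  by (auto simp: sd_star_def)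

lemma one_star[simp]: "1 \<in> sd_star T"
  using one_in by (simp add: star_iff)

lemma mult_star: "x \<in> sd_star T \<Longrightarrow> y \<in> sd_star T \<Longrightarrow> x * y \<in> sd_star T"
  using mult_in by (auto simp: star_iff)

lemma dvd_star: "sd_dvd T a b \<Longrightarrow> a \<in> sd_star T \<and> b \<in> sd_star T"
  by (simp add: sd_dvd_def)

lemma dvdI: "a \<in> sd_star T \<Longrightarrow> d \<in> sd_star T \<Longrightarrow> b = a * d \<Longrightarrow> sd_dvd T a b"
  using mult_star by (auto simp: sd_dvd_def)

lemma dvd_trans: "sd_dvd T a b \<Longrightarrow> sd_dvd T b c \<Longrightarrow> sd_dvd T a c"
proof -
  assume "sd_dvd T a b" "sd_dvd T b c"
  then obtain d e where "d \<in> sd_star T" "e \<in> sd_star T" "b = a * d" "c = b * e"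
    "a \<in> sd_star T" "c \<in> sd_star T"
    unfolding sd_dvd_def by blast
  then show ?thesis unfolding sd_dvd_def
    by (intro conjI bexI[of _ "d * e"]) (auto simp: mult.assoc intro: mult_star)
qed

lemma dvd_refl: "a \<in> sd_star T \<Longrightarrow> sd_dvd T a a"
  by (rule dvdI[of a 1]) auto

lemma assoc_refl: "a \<in> sd_star T \<Longrightarrow> sd_assoc T a a"
  by (simp add: sd_assoc_def dvd_refl)

lemma assoc_sym: "sd_assoc T a b \<Longrightarrow> sd_assoc T b a"
  by (simp add: sd_assoc_def)

lemma assoc_trans: "sd_assoc T a b \<Longrightarrow> sd_assoc T b c \<Longrightarrow> sd_assoc T a c"
  unfolding sd_assoc_def using dvd_trans by blast

lemma unit_iff_dvd_one: "sd_unit T u \<longleftrightarrow> sd_dvd T u 1"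
  unfolding sd_unit_def sd_dvd_def by auto

lemma unit_factor: "x \<in> sd_star T \<Longrightarrow> y \<in> sd_star T \<Longrightarrow> sd_unit T (x * y) \<Longrightarrow> sd_unit T x"
proof -
  assume a: "x \<in> sd_star T" "y \<in> sd_star T" "sd_unit T (x * y)"
  then obtain v where "v \<in> sd_star T" "x * y * v = 1" unfolding sd_unit_def by blast
  then show ?thesis using a unfolding sd_unit_def
    by (intro conjI bexI[of _ "y * v"]) (auto simp: mult.assoc intro: mult_star)
qed

lemma unit_mult: "sd_unit T x \<Longrightarrow> sd_unit T y \<Longrightarrow> sd_unit T (x * y)"
proof -
  assume "sd_unit T x" "sd_unit T y"
  then obtain v w where "x \<in> sd_star T" "y \<in> sd_star T" "v \<in> sd_star T" "w \<in> sd_star T"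
    "x * v = 1" "y * w = 1" unfolding sd_unit_def by blast
  moreover have "x * y * (v * w) = (x * v) * (y * w)" by (simp add: ac_simps)
  ultimately show ?thesis unfolding sd_unit_def
    by (intro conjI bexI[of _ "v * w"]) (auto intro: mult_star)
qed

lemma unit_assoc_one: "sd_unit T u \<Longrightarrow> sd_assoc T u 1"
  unfolding sd_assoc_def unit_iff_dvd_one by (auto intro: dvdI simp: sd_dvd_def)

lemma assoc_mult: "sd_assoc T a b \<Longrightarrow> sd_assoc T c d \<Longrightarrow> sd_assoc T (a * c) (b * d)"
proof -
  have *: "sd_dvd T (a * c) (b * d)" if "sd_dvd T a b" "sd_dvd T c d" for a b c d
  proof -
    from that obtain u v where "u \<in> sd_star T" "v \<in> sd_star T" "b = a * u" "d = c * v"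
      "a \<in> sd_star T" "c \<in> sd_star T" unfolding sd_dvd_def by blast
    moreover have "a * u * (c * v) = a * c * (u * v)" by (simp add: ac_simps)
    ultimately show ?thesis by (intro dvdI[of _ "u * v"]) (auto intro: mult_star)
  qed
  assume "sd_assoc T a b" "sd_assoc T c d"
  then show ?thesis unfolding sd_assoc_def using * by blast
qed

lemma assoc_dvd: "sd_assoc T d e \<Longrightarrow> sd_dvd T d a \<Longrightarrow> sd_dvd T e a"
  unfolding sd_assoc_def using dvd_trans by blast

lemma dvd_cancel:
  assumes "a \<in> sd_star T" "a = a * c" shows "c = 1"
  using assms by (simp add: star_iff)

lemma strict_dvd:
  assumes "a \<in> sd_star T" "c \<in> sd_star T" "\<not> sd_unit T c" "b = a * c"
  shows "sd_dvd T a b" "\<not> sd_dvd T b a"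
proof -
  show "sd_dvd T a b" by (rule dvdI[of a c]) (use assms in auto)
  show "\<not> sd_dvd T b a"
  proof
    assume "sd_dvd T b a"
    then obtain d where d: "d \<in> sd_star T" "a = b * d" by (auto simp: sd_dvd_def)
    then have "a = a * (c * d)" using assms by (simp add: mult.assoc)
    then have "c * d = 1" using assms(1) by (simp add: star_iff)
    then show False using assms(2,3) d(1) unfolding sd_unit_def by blast
  qed
qed

lemma prod_star: "\<forall>x\<in>set xs. x \<in> sd_star T \<Longrightarrow> prod_list xs \<in> sd_star T"
  by (induction xs) (auto intro: mult_star)

lemma atom_star: "sd_atom T x \<Longrightarrow> x \<in> sd_star T"
  by (simp add: sd_atom_def)

lemma prod_atoms_nonunit:
  assumes "ys \<noteq> []" "\<forall>x\<in>set ys. sd_atom T x"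
  shows "\<not> sd_unit T (prod_list ys)"
proof
  assume u: "sd_unit T (prod_list ys)"
  obtain y ys' where ys: "ys = y # ys'" using assms(1) by (cases ys) auto
  have "y \<in> sd_star T" using assms(2) ys by (auto intro: atom_star)
  have "prod_list ys' \<in> sd_star T" by (rule prod_star) (use assms(2) ys atom_star in auto)
  then have "sd_unit T y" using u ys unit_factor \<open>y \<in> sd_star T\<close> by auto
  then show False using assms(2) ys by (auto simp: sd_atom_def)
qed

lemma r_iff: "(xs, ys) \<in> sd_fact_equiv T \<longleftrightarrow> (\<exists>zs. mset zs = mset ys \<and> list_all2 (sd_assoc T) xs zs)"
  by (simp add: sd_fact_equiv_def)

lemma r_trans: "(xs, ys) \<in> sd_fact_equiv T \<Longrightarrow> (ys, ws) \<in> sd_fact_equiv T \<Longrightarrow> (xs, ws) \<in> sd_fact_equiv T"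
proof -
  assume "(xs, ys) \<in> sd_fact_equiv T" "(ys, ws) \<in> sd_fact_equiv T"
  then obtain zs us where z: "mset zs = mset ys" "list_all2 (sd_assoc T) xs zs"
    and u: "mset us = mset ws" "list_all2 (sd_assoc T) ys us" by (auto simp: r_iff)
  obtain us' where "list_all2 (sd_assoc T) zs us'" "mset us' = mset us"
    using list_all2_reorder_left_invariance[OF u(2) z(1)] by blast
  moreover have "list_all2 (sd_assoc T) xs us'"
    using z(2) \<open>list_all2 (sd_assoc T) zs us'\<close> list_all2_trans assoc_trans by blast
  ultimately show ?thesis using u by (auto simp: r_iff)
qed

lemma r_sym: "(xs, ys) \<in> sd_fact_equiv T \<Longrightarrow> (ys, xs) \<in> sd_fact_equiv T"
proof -
  assume "(xs, ys) \<in> sd_fact_equiv T"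
  then obtain zs where z: "mset zs = mset ys" "list_all2 (sd_assoc T) xs zs" by (auto simp: r_iff)
  have "list_all2 (sd_assoc T) zs xs" using z(2)
    by (simp add: assoc_sym list_all2_conv_all_nth)
  then obtain xs' where "list_all2 (sd_assoc T) ys xs'" "mset xs' = mset xs"
    using list_all2_reorder_left_invariance[of "sd_assoc T" zs xs ys] z(1) by auto
  then show ?thesis by (auto simp: r_iff)
qed

lemma r_image_eq: "(xs, ys) \<in> sd_fact_equiv T \<Longrightarrow> sd_fact_equiv T `` {xs} = sd_fact_equiv T `` {ys}"
  using r_trans r_sym by blast

lemma r_refl: "\<forall>x\<in>set xs. x \<in> sd_star T \<Longrightarrow> (xs, xs) \<in> sd_fact_equiv T"
  unfolding r_iff by (intro exI[of _ xs]) (auto simp: list_all2_conv_all_nth assoc_refl)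

lemma sub_assoc:
  "list_all2 (sd_assoc T) as zs \<Longrightarrow> N \<subseteq># mset zs \<Longrightarrow>
    \<exists>M. M \<subseteq># mset as \<and> sd_assoc T (prod_mset M) (prod_mset N)"
proof (induction as zs arbitrary: N rule: list_all2_induct)
  case Nil
  then show ?case by (auto intro: assoc_refl)
next
  case (Cons a as z zs)
  show ?case
  proof (cases "z \<in># N")
    case True
    then have "N - {#z#} \<subseteq># mset zs" using Cons.prems
      by (metis insert_DiffM add_mset_remove_trivial insert_subset_eq_iff mset.simps(2))
    then obtain M where M: "M \<subseteq># mset as" "sd_assoc T (prod_mset M) (prod_mset (N - {#z#}))"
      using Cons.IH by blast
    have "sd_assoc T (a * prod_mset M) (z * prod_mset (N - {#z#}))"
      using assoc_mult Cons.hyps(1) M(2) by blast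
    moreover have "z * prod_mset (N - {#z#}) = prod_mset N" using True
      by (metis prod_mset.remove)
    ultimately show ?thesis using M(1)
      by (intro exI[of _ "add_mset a M"]) auto
  next
    case False
    then have "N \<subseteq># mset zs" using Cons.prems
      by (metis inter_add_left1 subset_mset.inf.absorb_iff2 mset.simps(2))
    then obtain M where "M \<subseteq># mset as" "sd_assoc T (prod_mset M) (prod_mset N)"
      using Cons.IH by blast
    then show ?thesis by (intro exI[of _ M]) (auto intro: subset_mset.order_trans)
  qed
qed

end

definition fdiv :: "'a::idom set \<Rightarrow> bool" where
  "fdiv T \<longleftrightarrow> (\<forall>a\<in>sd_star T. \<exists>D. finite D \<and> (\<forall>d. sd_dvd T d a \<longrightarrow> (\<exists>e\<in>D. sd_assoc T d e)))"



context sdom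
begin

lemma fdiv_D:
  assumes "fdiv T" "a \<in> sd_star T"
  shows "\<exists>D. finite D \<and> (\<forall>e\<in>D. sd_dvd T e a) \<and> (\<forall>d. sd_dvd T d a \<longrightarrow> (\<exists>e\<in>D. sd_assoc T d e))"
proof -
  obtain D where D: "finite D" "\<forall>d. sd_dvd T d a \<longrightarrow> (\<exists>e\<in>D. sd_assoc T d e)"
    using assms unfolding fdiv_def by blast
  have "\<exists>e\<in>D \<inter> {e. sd_dvd T e a}. sd_assoc T d e" if dA: "sd_dvd T d a" for d
  proof -
    obtain e where "e \<in> D" "sd_assoc T d e" using D dA by blast
    then show ?thesis using assoc_dvd[OF _ dA] by blast
  qed
  then show ?thesis using D(1) by (intro exI[of _ "D \<inter> {e. sd_dvd T e a}"]) auto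
qed

lemma fdiv_keyI:
  assumes "\<And>a. a \<in> sd_star T \<Longrightarrow> \<exists>\<phi>::'a \<Rightarrow> 'b. finite (\<phi> ` {d. sd_dvd T d a}) \<and>
     (\<forall>d1 d2. sd_dvd T d1 a \<longrightarrow> sd_dvd T d2 a \<longrightarrow> \<phi> d1 = \<phi> d2 \<longrightarrow> sd_assoc T d1 d2)"
  shows "fdiv T"
  unfolding fdiv_def
proof
  fix a assume a: "a \<in> sd_star T"
  then obtain \<phi> :: "'a \<Rightarrow> 'b" where fin: "finite (\<phi> ` {d. sd_dvd T d a})"
    and inj: "\<forall>d1 d2. sd_dvd T d1 a \<longrightarrow> sd_dvd T d2 a \<longrightarrow> \<phi> d1 = \<phi> d2 \<longrightarrow> sd_assoc T d1 d2"
    using assms by blast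
  define ch where "ch y = (SOME d. sd_dvd T d a \<and> \<phi> d = y)" for y
  show "\<exists>D. finite D \<and> (\<forall>d. sd_dvd T d a \<longrightarrow> (\<exists>e\<in>D. sd_assoc T d e))"
  proof (intro exI conjI allI impI)
    show "finite (ch ` \<phi> ` {d. sd_dvd T d a})" using fin by blast
    fix d assume d: "sd_dvd T d a"
    then have "sd_dvd T (ch (\<phi> d)) a \<and> \<phi> (ch (\<phi> d)) = \<phi> d"
      unfolding ch_def using someI[of "\<lambda>x. sd_dvd T x a \<and> \<phi> x = \<phi> d" d] by simp
    then have "sd_assoc T d (ch (\<phi> d))" using inj d by metis
    then show "\<exists>e\<in>ch ` \<phi> ` {d. sd_dvd T d a}. sd_assoc T d e" using d by blast
  qed
qed

lemma fdiv_atomic: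
  assumes "fdiv T" "a \<in> sd_star T" "\<not> sd_unit T a"
  shows "\<exists>xs. xs \<noteq> [] \<and> (\<forall>x\<in>set xs. sd_atom T x) \<and> prod_list xs = a"
proof -
  obtain D where D: "finite D" "\<forall>e\<in>D. sd_dvd T e a" "\<forall>d. sd_dvd T d a \<longrightarrow> (\<exists>e\<in>D. sd_assoc T d e)"
    using fdiv_D[OF assms(1,2)] by blast
  define \<mu> where "\<mu> d = card {e\<in>D. sd_dvd T e d \<and> \<not> sd_dvd T d e}" for d
  have mu_less: "\<mu> b < \<mu> d" if bd: "sd_dvd T d a" "d = b * c" "b \<in> sd_star T" "c \<in> sd_star T"
    "\<not> sd_unit T c" for b c d
  proof -
    have s: "sd_dvd T b d" "\<not> sd_dvd T d b" using strict_dvd[OF bd(3,4,5,2)] by auto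
    then have "sd_dvd T b a" using dvd_trans[OF s(1) bd(1)] by blast
    then obtain e0 where e0: "e0 \<in> D" "sd_assoc T b e0" using D by blast
    have sub: "{e\<in>D. sd_dvd T e b \<and> \<not> sd_dvd T b e} \<subseteq> {e\<in>D. sd_dvd T e d \<and> \<not> sd_dvd T d e}"
      using dvd_trans[OF _ s(1)] dvd_trans[OF s(1)] s(2) by blast
    have "e0 \<in> {e\<in>D. sd_dvd T e d \<and> \<not> sd_dvd T d e}"
      using e0 dvd_trans[OF _ s(1), of e0] dvd_trans[of d e0 b] s(2) unfolding sd_assoc_def by blast
    moreover have "e0 \<notin> {e\<in>D. sd_dvd T e b \<and> \<not> sd_dvd T b e}"
      using e0 unfolding sd_assoc_def by blast
    ultimately have "{e\<in>D. sd_dvd T e b \<and> \<not> sd_dvd T b e} \<subset> {e\<in>D. sd_dvd T e d \<and> \<not> sd_dvd T d e}"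
      using sub by blast
    then show ?thesis unfolding \<mu>_def by (rule psubset_card_mono[rotated]) (use D in auto)
  qed
  have main: "\<not> sd_unit T d \<longrightarrow> (\<exists>xs. xs \<noteq> [] \<and> (\<forall>x\<in>set xs. sd_atom T x) \<and> prod_list xs = d)"
    if "sd_dvd T d a" for d
    using that
  proof (induction "\<mu> d" arbitrary: d rule: less_induct)
    case less
    show ?case
    proof
      assume nu: "\<not> sd_unit T d"
      have dS: "d \<in> sd_star T" using less.prems dvd_star by blast
      show "\<exists>xs. xs \<noteq> [] \<and> (\<forall>x\<in>set xs. sd_atom T x) \<and> prod_list xs = d"
      proof (cases "sd_atom T d")
        case True
        then show ?thesis by (intro exI[of _ "[d]"]) auto
      next
        case False
        then obtain b c where bc: "b \<in> sd_star T" "c \<in> sd_star T" "d = b * c"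
          "\<not> sd_unit T b" "\<not> sd_unit T c"
          using nu dS unfolding sd_atom_def by blast
        have ba: "sd_dvd T b a" "sd_dvd T c a"
          using dvd_trans[OF dvdI[of b c d] less.prems] dvd_trans[OF dvdI[of c b d] less.prems] bc
          by (auto simp: mult.commute)
        have "\<mu> b < \<mu> d" using less(2) bc by (intro mu_less[of d b c]) auto
        then obtain xs where xs: "xs \<noteq> []" "\<forall>x\<in>set xs. sd_atom T x" "prod_list xs = b"
          using less(1)[of b] ba bc by blast
        have "\<mu> c < \<mu> d" using less(2) bc by (intro mu_less[of d c b]) (auto simp: mult.commute)
        then obtain ys where ys: "\<forall>x\<in>set ys. sd_atom T x" "prod_list ys = c"
          using less(1)[of c] ba bc by blast
        show ?thesis using xs ys bc by (intro exI[of _ "xs @ ys"]) auto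
      qed
    qed
  qed
  show ?thesis using main[of a] assms dvd_refl by blast
qed

lemma atom_dvd_prod:
  assumes "\<forall>x\<in>set xs. sd_atom T x" "x \<in> set xs"
  shows "sd_dvd T x (prod_list xs)"
proof -
  have "prod_list xs = x * prod_list (remove1 x xs)"
    using assms(2) by (metis prod_mset_prod_list prod_mset.remove mset_remove1 set_mset_mset)
  moreover have "prod_list (remove1 x xs) \<in> sd_star T"
    using assms(1) by (intro prod_star) (auto dest: in_set_remove1 intro: atom_star)
  ultimately show ?thesis using assms atom_star by (intro dvdI) auto
qed

lemma fdiv_finite:
  assumes "fdiv T" "a \<in> sd_star T"
  shows "finite (sd_factorizations T a // sd_fact_equiv T)"
proof -
  obtain D where D: "finite D" "\<forall>e\<in>D. sd_dvd T e a" "\<forall>d. sd_dvd T d a \<longrightarrow> (\<exists>e\<in>D. sd_assoc T d e)"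
    using fdiv_D[OF assms(1,2)] by blast
  define rep where "rep d = (SOME e. e \<in> D \<and> sd_assoc T d e)" for d
  have rep: "rep d \<in> D \<and> sd_assoc T d (rep d)" if "sd_dvd T d a" for d
    unfolding rep_def using someI_ex[of "\<lambda>e. e \<in> D \<and> sd_assoc T d e"] D(3) that by blast
  let ?r = "sd_fact_equiv T"
  have len: "length xs \<le> card D" if xs: "xs \<in> sd_factorizations T a" for xs
  proof -
    have at: "\<forall>x\<in>set xs. sd_atom T x" and pa: "prod_list xs = a"
      using xs by (auto simp: sd_factorizations_def)
    define p where "p k = prod_list (take k xs)" for k
    have pd: "sd_dvd T (p k) a" for k
    proof -
      have "a = p k * prod_list (drop k xs)"
        unfolding p_def pa[symmetric] by (metis prod_list.append append_take_drop_id)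
      moreover have "p k \<in> sd_star T" "prod_list (drop k xs) \<in> sd_star T"
        unfolding p_def using at atom_star by (auto intro!: prod_star dest: in_set_takeD in_set_dropD)
      ultimately show ?thesis by (intro dvdI[of "p k" "prod_list (drop k xs)"]) auto
    qed
    have strict: "\<not> sd_dvd T (p k) (p j)" if jk0: "j < k" "k \<le> length xs" for j k
    proof -
      obtain m where m: "k = j + m" "m > 0" using jk0 less_imp_add_positive by blast
      let ?q = "prod_list (take m (drop j xs))"
      have eq: "p k = p j * ?q"
        unfolding p_def m take_add by simp
      have ne: "take m (drop j xs) \<noteq> []" using jk0 m by auto
      have at2: "\<forall>x\<in>set (take m (drop j xs)). sd_atom T x"
        using at by (auto dest: in_set_takeD in_set_dropD)
      have qS: "?q \<in> sd_star T" using at2 atom_star by (intro prod_star) auto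
      have qU: "\<not> sd_unit T ?q" using prod_atoms_nonunit[OF ne at2] .
      have pj: "p j \<in> sd_star T" using dvd_star[OF pd[of j]] by blast
      show ?thesis using strict_dvd(2)[OF pj qS qU eq] .
    qed
    have inj: "inj_on (rep \<circ> p) {0..length xs}"
    proof (rule inj_onI)
      fix j k assume jk: "j \<in> {0..length xs}" "k \<in> {0..length xs}" "(rep \<circ> p) j = (rep \<circ> p) k"
      have a1: "sd_assoc T (p j) (rep (p k))" using rep[OF pd, of j] jk(3) by simp
      have a2: "sd_assoc T (p k) (rep (p k))" using rep[OF pd] by blast
      have as: "sd_assoc T (p j) (p k)" using assoc_trans[OF a1 assoc_sym[OF a2]] .
      show "j = k"
      proof (rule ccontr)
        assume "j \<noteq> k"
        then consider "j < k" | "k < j" by linarith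
        then show False
        proof cases
          case 1 then show False using strict[of j k] jk as by (auto simp: sd_assoc_def)
        next
          case 2 then show False using strict[of k j] jk as by (auto simp: sd_assoc_def)
        qed
      qed
    qed
    have "card {0..length xs} \<le> card D"
      by (rule card_inj_on_le[OF inj]) (use rep[OF pd] D(1) in auto)
    then show ?thesis by simp
  qed
  have "sd_factorizations T a // ?r \<subseteq> (\<lambda>ys. ?r `` {ys}) ` {ys. set ys \<subseteq> D \<and> length ys \<le> card D}"
  proof
    fix q assume "q \<in> sd_factorizations T a // ?r"
    then obtain xs where xs: "xs \<in> sd_factorizations T a" "q = ?r `` {xs}"
      unfolding quotient_def by blast
    have at: "\<forall>x\<in>set xs. sd_atom T x" and pa: "prod_list xs = a"
      using xs by (auto simp: sd_factorizations_def)
    have dv: "sd_dvd T x a" if "x \<in> set xs" for x using atom_dvd_prod[OF at that] pa by simp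
    have "list_all2 (sd_assoc T) xs (map rep xs)"
      using rep dv by (auto simp: list_all2_conv_all_nth)
    then have "(xs, map rep xs) \<in> ?r" unfolding r_iff by blast
    then have "q = ?r `` {map rep xs}" using xs r_image_eq by simp
    moreover have "set (map rep xs) \<subseteq> D" using rep dv by auto
    moreover have "length (map rep xs) \<le> card D" using len xs by simp
    ultimately show "q \<in> (\<lambda>ys. ?r `` {ys}) ` {ys. set ys \<subseteq> D \<and> length ys \<le> card D}" by blast
  qed
  moreover have "finite {ys. set ys \<subseteq> D \<and> length ys \<le> card D}"
    using finite_lists_length_le[OF D(1)] by simp
  ultimately show ?thesis using finite_subset by blast
qed

lemma fdiv_FFS: "fdiv T \<Longrightarrow> FFS T"
  unfolding FFS_def sd_atomic_def using fdiv_atomic fdiv_finite by blast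

end


context sdom
begin

lemma FFS_fdiv:
  assumes ffs: "FFS T"
  shows "fdiv T"
  unfolding fdiv_def
proof
  fix a assume a: "a \<in> sd_star T"
  let ?r = "sd_fact_equiv T"
  let ?F = "sd_factorizations T a"
  let ?Q = "?F // ?r"
  have finQ: "finite ?Q" using ffs a unfolding FFS_def by blast
  have "\<forall>q\<in>?Q. \<exists>xs. xs \<in> ?F \<and> q = ?r `` {xs}" unfolding quotient_def by blast
  then obtain g where g: "\<And>q. q \<in> ?Q \<Longrightarrow> g q \<in> ?F \<and> q = ?r `` {g q}" by metis
  define D where "D = {a, 1} \<union> (\<Union>q\<in>?Q. prod_list ` {ys. set ys \<subseteq> set (g q) \<and> length ys \<le> length (g q)})"
  have "finite D" unfolding D_def using finQ finite_lists_length_le by auto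
  moreover have "\<exists>e\<in>D. sd_assoc T d e" if dA: "sd_dvd T d a" for d
  proof -
    obtain e where e: "e \<in> sd_star T" "a = d * e" and dS: "d \<in> sd_star T"
      using dA by (auto simp: sd_dvd_def)
    show ?thesis
    proof (cases "sd_unit T d")
      case True
      then show ?thesis using unit_assoc_one unfolding D_def by blast
    next
      case dnu: False
      show ?thesis
      proof (cases "sd_unit T e")
        case True
        then obtain v where v: "v \<in> sd_star T" "e * v = 1" unfolding sd_unit_def by blast
        have "d = a * v" using e v by (metis mult.assoc mult.right_neutral)
        then have "sd_assoc T d a" unfolding sd_assoc_def using dA dvdI[OF a v(1)] by simp
        then show ?thesis unfolding D_def by blast
      next
        case enu: False
        obtain xs where xs: "\<forall>x\<in>set xs. sd_atom T x" "prod_list xs = d"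
          using ffs dS dnu unfolding FFS_def sd_atomic_def by blast
        obtain ys where ys: "\<forall>x\<in>set ys. sd_atom T x" "prod_list ys = e"
          using ffs e(1) enu unfolding FFS_def sd_atomic_def by blast
        have zF: "xs @ ys \<in> ?F" using xs ys e by (auto simp: sd_factorizations_def)
        define q where "q = ?r `` {xs @ ys}"
        have qQ: "q \<in> ?Q" unfolding q_def quotient_def using zF by blast
        have "(xs @ ys, xs @ ys) \<in> ?r" using xs ys atom_star by (intro r_refl) auto
        then have "xs @ ys \<in> ?r `` {g q}" using g[OF qQ] q_def by blast
        then obtain zs where zs: "mset zs = mset (xs @ ys)" "list_all2 (sd_assoc T) (g q) zs"
          by (auto simp: r_iff)
        have "mset xs \<subseteq># mset zs" using zs(1) by simp
        then obtain M where M: "M \<subseteq># mset (g q)" "sd_assoc T (prod_mset M) (prod_mset (mset xs))"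
          using sub_assoc[OF zs(2)] by blast
        obtain ws where ws: "mset ws = M" using ex_mset by blast
        have "set ws \<subseteq> set (g q)" using M(1) ws by (metis mset_subset_eqD set_mset_mset subsetI)
        moreover have "length ws \<le> length (g q)" using M(1) ws by (metis size_mset size_mset_mono)
        ultimately have "prod_list ws \<in> D" unfolding D_def using qQ by blast
        moreover have "sd_assoc T d (prod_list ws)" using M(2) ws xs(2)
          by (metis assoc_sym prod_mset_prod_list)
        ultimately show ?thesis by blast
      qed
    qed
  qed
  ultimately show "\<exists>D. finite D \<and> (\<forall>d. sd_dvd T d a \<longrightarrow> (\<exists>e\<in>D. sd_assoc T d e))" by blast
qed

lemma FFS_iff_fdiv: "FFS T \<longleftrightarrow> fdiv T"
  using FFS_fdiv fdiv_FFS by blast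

end


lemma finite_submsets: "finite {M. M \<subseteq># N}"
proof -
  have "{M. M \<subseteq># N} \<subseteq> mset ` {xs. set xs \<subseteq> set_mset N \<and> length xs \<le> size N}"
  proof
    fix M assume "M \<in> {M. M \<subseteq># N}"
    then have M: "M \<subseteq># N" by simp
    obtain xs where xs: "mset xs = M" using ex_mset by blast
    have "set xs \<subseteq> set_mset N" using M xs by (metis mset_subset_eqD set_mset_mset subsetI)
    moreover have "length xs \<le> size N" using M xs by (metis size_mset size_mset_mono)
    ultimately show "M \<in> mset ` {xs. set xs \<subseteq> set_mset N \<and> length xs \<le> size N}" using xs by blast
  qed
  moreover have "finite {xs. set xs \<subseteq> set_mset N \<and> length xs \<le> size N}"
    using finite_lists_length_le[of "set_mset N"] by simp
  ultimately show ?thesis using finite_subset by blast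
qed

context sdom
begin

lemma sum_in: "finite A \<Longrightarrow> (\<forall>i\<in>A. f i \<in> T) \<Longrightarrow> sum f A \<in> T"
  by (induction A rule: finite_induct) (auto intro: add_in zero_in)

lemma poly_sd: "semidomain (poly_semidomain T)"
  unfolding semidomain_def poly_semidomain_def
  by (auto simp: coeff_mult zero_in one_in coeff_1 intro!: add_in sum_in mult_in)

lemma poly_sdom: "sdom (poly_semidomain T)"
  by (rule sdom.intro) (rule poly_sd)

lemma const_in: "c \<in> T \<Longrightarrow> [:c:] \<in> poly_semidomain T"
  by (auto simp: poly_semidomain_def coeff_pCons zero_in split: nat.splits)

lemma coeff_in: "p \<in> poly_semidomain T \<Longrightarrow> coeff p n \<in> T"
  by (simp add: poly_semidomain_def)

lemma const_star: "c \<in> sd_star T \<Longrightarrow> [:c:] \<in> sd_star (poly_semidomain T)"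
  using const_in by (auto simp: sd_star_def)

lemma poly_star_iff: "p \<in> sd_star (poly_semidomain T) \<longleftrightarrow> p \<in> poly_semidomain T \<and> p \<noteq> 0"
  by (simp add: sd_star_def)

lemma lead_star: "p \<in> sd_star (poly_semidomain T) \<Longrightarrow> lead_coeff p \<in> sd_star T"
  by (auto simp: poly_star_iff star_iff coeff_in)

lemma poly_dvd_const:
  assumes "sd_dvd (poly_semidomain T) e [:d:]"
  shows "e = [:coeff e 0:] \<and> sd_dvd T (coeff e 0) d"
proof -
  obtain w where w: "w \<in> sd_star (poly_semidomain T)" "[:d:] = e * w"
    and e: "e \<in> sd_star (poly_semidomain T)" using assms by (auto simp: sd_dvd_def)
  have nz: "e \<noteq> 0" "w \<noteq> 0" using w e by (auto simp: poly_star_iff)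
  have "degree (e * w) = 0" unfolding w(2)[symmetric] by simp
  then have "degree e + degree w = 0" using degree_mult_eq[OF nz] by simp
  then have de: "e = [:coeff e 0:]" "w = [:coeff w 0:]"
    using degree_0_id[of e, symmetric] degree_0_id[of w, symmetric] by simp_all
  have "d = coeff e 0 * coeff w 0" using arg_cong[OF w(2), of "\<lambda>p. coeff p 0"] by (simp add: coeff_mult_0)
  moreover have "coeff e 0 \<noteq> 0" "coeff w 0 \<noteq> 0" using de nz by auto
  moreover have "coeff e 0 \<in> sd_star T" "coeff w 0 \<in> sd_star T"
    using e w calculation(2,3) by (auto simp: poly_star_iff star_iff coeff_in)
  ultimately show ?thesis using de dvdI by blast
qed

lemma const_dvd_poly:
  assumes "sd_dvd (poly_semidomain T) [:d:] e" "e = [:e0:]"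
  shows "sd_dvd T d e0"
proof -
  obtain w where w: "w \<in> sd_star (poly_semidomain T)" "e = [:d:] * w"
    and d: "[:d:] \<in> sd_star (poly_semidomain T)" using assms by (auto simp: sd_dvd_def)
  have nz: "[:d:] \<noteq> 0" "w \<noteq> 0" using w d by (auto simp: poly_star_iff)
  have "degree ([:d:] * w) = 0" unfolding w(2)[symmetric] assms(2) by simp
  then have "degree w = 0" using degree_mult_eq[OF nz] by simp
  then have dw: "w = [:coeff w 0:]" using degree_0_id[of w, symmetric] by simp
  have "e0 = d * coeff w 0" using arg_cong[OF w(2), of "\<lambda>p. coeff p 0"] assms(2) by (simp add: coeff_mult_0)
  moreover have "coeff w 0 \<noteq> 0" "d \<noteq> 0" using dw nz by auto
  moreover have "d \<in> sd_star T" "coeff w 0 \<in> sd_star T"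
    using d w calculation(2,3) coeff_in[of "[:d:]" 0] by (auto simp: poly_star_iff star_iff coeff_in)
  ultimately show ?thesis using dvdI by blast
qed

lemma fdiv_poly_imp: "fdiv (poly_semidomain T) \<Longrightarrow> fdiv T"
  unfolding fdiv_def
proof
  assume fp: "\<forall>a\<in>sd_star (poly_semidomain T). \<exists>D. finite D \<and>
      (\<forall>d. sd_dvd (poly_semidomain T) d a \<longrightarrow> (\<exists>e\<in>D. sd_assoc (poly_semidomain T) d e))"
  fix a assume a: "a \<in> sd_star T"
  then obtain D' where D': "finite D'" "\<forall>d. sd_dvd (poly_semidomain T) d [:a:] \<longrightarrow>
      (\<exists>e\<in>D'. sd_assoc (poly_semidomain T) d e)"
    using fp const_star by blast
  show "\<exists>D. finite D \<and> (\<forall>d. sd_dvd T d a \<longrightarrow> (\<exists>e\<in>D. sd_assoc T d e))"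
  proof (intro exI[of _ "(\<lambda>e. coeff e 0) ` D'"] conjI allI impI)
    show "finite ((\<lambda>e. coeff e 0) ` D')" using D'(1) by simp
    fix d assume dA: "sd_dvd T d a"
    then obtain c where c: "c \<in> sd_star T" "a = d * c" "d \<in> sd_star T" by (auto simp: sd_dvd_def)
    have "sd_dvd (poly_semidomain T) [:d:] [:a:]"
      using c by (intro sdom.dvdI[OF poly_sdom, of _ "[:c:]"]) (auto intro: const_star)
    then obtain e where e: "e \<in> D'" "sd_assoc (poly_semidomain T) [:d:] e" using D' by blast
    then have "sd_dvd (poly_semidomain T) e [:d:]" "sd_dvd (poly_semidomain T) [:d:] e"
      by (auto simp: sd_assoc_def)
    then have "sd_dvd T (coeff e 0) d" "sd_dvd T d (coeff e 0)"
      using poly_dvd_const const_dvd_poly by blast+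
    then show "\<exists>e\<in>(\<lambda>e. coeff e 0) ` D'. sd_assoc T d e" using e(1) by (auto simp: sd_assoc_def)
  qed
qed

end


lemma lead_fract_poly: "lead_coeff (fract_poly p) = to_fract (lead_coeff p)"
  by (simp add: degree_map_poly coeff_map_poly)

context sdom
begin

lemma poly_key:
  assumes nz1: "g1 \<in> sd_star (poly_semidomain T)" and nz2: "g2 \<in> sd_star (poly_semidomain T)"
    and pf: "prime_factorization (fract_poly g1) = prime_factorization (fract_poly g2)"
    and la: "sd_assoc T (lead_coeff g1) (lead_coeff g2)"
  shows "sd_dvd (poly_semidomain T) g1 g2"
proof -
  have g1nz: "g1 \<noteq> 0" using nz1 by (simp add: poly_star_iff)
  have g2nz: "g2 \<noteq> 0" using nz2 by (simp add: poly_star_iff)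
  let ?G1 = "fract_poly g1" and ?G2 = "fract_poly g2"
  have G1: "?G1 \<noteq> 0" using g1nz by simp
  have G2: "?G2 \<noteq> 0" using g2nz by simp
  have "normalize ?G1 = normalize ?G2"
    using pf prod_mset_prime_factorization[OF G1] prod_mset_prime_factorization[OF G2] by simp
  then have "?G1 dvd ?G2 \<and> ?G2 dvd ?G1" by (simp only: associated_iff_dvd)
  then obtain k k' where k: "?G2 = ?G1 * k" and k': "?G1 = ?G2 * k'" unfolding dvd_def by blast
  have "?G1 * (k * k') = (?G1 * k) * k'" by (simp only: mult.assoc)
  also have "\<dots> = ?G2 * k'" by (simp only: k)
  also have "\<dots> = ?G1" by (simp only: k'[symmetric])
  finally have "?G1 * 1 = ?G1 * (k * k')" by simp
  then have "1 = k * k'" using mult_left_cancel[OF G1] by blast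
  then have "is_unit k" unfolding dvd_def by blast
  then obtain c where c: "k = [:c:]" using is_unit_poly_iff by blast
  have G2s: "?G2 = smult c ?G1" using k c by simp
  have lc: "to_fract (lead_coeff g2) = c * to_fract (lead_coeff g1)"
    using arg_cong[OF G2s, of lead_coeff] by (simp add: lead_fract_poly)
  have "smult (to_fract (lead_coeff g1)) ?G2 = smult (to_fract (lead_coeff g2)) ?G1"
    using G2s lc by (simp add: mult.commute)
  then have "fract_poly (smult (lead_coeff g1) g2) = fract_poly (smult (lead_coeff g2) g1)"
    by simp
  then have eq: "smult (lead_coeff g1) g2 = smult (lead_coeff g2) g1" by (simp only: fract_poly_eq_iff)
  obtain u where u: "u \<in> sd_star T" "lead_coeff g2 = lead_coeff g1 * u"
    using la unfolding sd_assoc_def sd_dvd_def by blast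
  have "smult (lead_coeff g1) g2 = smult (lead_coeff g1) (smult u g1)" unfolding eq u(2) smult_smult ..
  moreover have "lead_coeff g1 \<noteq> 0" using g1nz by simp
  ultimately have "g2 = smult u g1" using smult_cancel by blast
  then have "g2 = g1 * [:u:]" by simp
  then show ?thesis by (rule sdom.dvdI[OF poly_sdom nz1 const_star[OF u(1)]])
qed


lemma poly_div_facts:
  assumes gd: "sd_dvd (poly_semidomain T) g f"
  shows "sd_dvd T (lead_coeff g) (lead_coeff f) \<and> fract_poly g dvd fract_poly f \<and> g \<noteq> 0 \<and> g \<in> sd_star (poly_semidomain T)"
proof -
  obtain h where h: "h \<in> sd_star (poly_semidomain T)" "f = g * h" and g: "g \<in> sd_star (poly_semidomain T)"
    using gd unfolding sd_dvd_def by blast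
  have "lead_coeff f = lead_coeff g * lead_coeff h" using h(2) by (simp add: lead_coeff_mult)
  then have "sd_dvd T (lead_coeff g) (lead_coeff f)" by (rule dvdI[OF lead_star[OF g] lead_star[OF h(1)]])
  moreover have "fract_poly f = fract_poly g * fract_poly h" using h(2) by simp
  then have "fract_poly g dvd fract_poly f" by (rule Rings.dvdI)
  moreover have "g \<noteq> 0" using g by (simp add: poly_star_iff)
  ultimately show ?thesis using g by blast
qed

lemma fdiv_poly:
  assumes fd: "fdiv T"
  shows "fdiv (poly_semidomain T)"
proof (rule sdom.fdiv_keyI[OF poly_sdom])
  let ?P = "poly_semidomain T"
  fix f assume f: "f \<in> sd_star ?P"
  let ?l = "lead_coeff f"
  have lS: "?l \<in> sd_star T" using lead_star[OF f] .
  obtain D where D: "finite D" "\<forall>e\<in>D. sd_dvd T e ?l" "\<forall>d. sd_dvd T d ?l \<longrightarrow> (\<exists>e\<in>D. sd_assoc T d e)"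
    using fdiv_D[OF fd lS] by blast
  define rep where "rep d = (SOME e. e \<in> D \<and> sd_assoc T d e)" for d
  have rep: "rep d \<in> D \<and> sd_assoc T d (rep d)" if "sd_dvd T d ?l" for d
    unfolding rep_def using someI_ex[of "\<lambda>e. e \<in> D \<and> sd_assoc T d e"] D(3) that by blast
  have fnz: "f \<noteq> 0" using f by (simp add: poly_star_iff)
  define \<phi> where "\<phi> g = (prime_factorization (fract_poly g), rep (lead_coeff g))" for g
  show "\<exists>\<phi>::'a poly \<Rightarrow> 'a fract poly multiset \<times> 'a. finite (\<phi> ` {g. sd_dvd ?P g f}) \<and>
     (\<forall>d1 d2. sd_dvd ?P d1 f \<longrightarrow> sd_dvd ?P d2 f \<longrightarrow> \<phi> d1 = \<phi> d2 \<longrightarrow> sd_assoc ?P d1 d2)"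
  proof (intro exI[of _ \<phi>] conjI allI impI)
    have "\<phi> ` {g. sd_dvd ?P g f} \<subseteq> {M. M \<subseteq># prime_factorization (fract_poly f)} \<times> D"
    proof
      fix y assume "y \<in> \<phi> ` {g. sd_dvd ?P g f}"
      then obtain g where g: "sd_dvd ?P g f" "y = \<phi> g" by blast
      note gf = poly_div_facts[OF g(1)]
      have "fract_poly g \<noteq> 0" "fract_poly f \<noteq> 0" using gf fnz by simp_all
      then have "prime_factorization (fract_poly g) \<subseteq># prime_factorization (fract_poly f)"
        using gf prime_factorization_subset_iff_dvd by blast
      moreover have "rep (lead_coeff g) \<in> D" using rep gf by blast
      ultimately show "y \<in> {M. M \<subseteq># prime_factorization (fract_poly f)} \<times> D"
        using g(2) unfolding \<phi>_def by simp
    qed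
    moreover have "finite ({M. M \<subseteq># prime_factorization (fract_poly f)} \<times> D)"
      using finite_submsets D(1) by blast
    ultimately show "finite (\<phi> ` {g. sd_dvd ?P g f})" using finite_subset by blast
    fix d1 d2 assume d: "sd_dvd ?P d1 f" "sd_dvd ?P d2 f" "\<phi> d1 = \<phi> d2"
    then have pf: "prime_factorization (fract_poly d1) = prime_factorization (fract_poly d2)"
      and r: "rep (lead_coeff d1) = rep (lead_coeff d2)" unfolding \<phi>_def by simp_all
    note f1 = poly_div_facts[OF d(1)] and f2 = poly_div_facts[OF d(2)]
    have a1: "sd_assoc T (lead_coeff d1) (rep (lead_coeff d2))" using rep[of "lead_coeff d1"] f1 r by simp
    have a2: "sd_assoc T (lead_coeff d2) (rep (lead_coeff d2))" using rep f2 by blast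
    have la: "sd_assoc T (lead_coeff d1) (lead_coeff d2)" using assoc_trans[OF a1 assoc_sym[OF a2]] .
    have "sd_dvd ?P d1 d2" using poly_key f1 f2 pf la by blast
    moreover have "sd_dvd ?P d2 d1" using poly_key f1 f2 pf[symmetric] assoc_sym[OF la] by blast
    ultimately show "sd_assoc ?P d1 d2" unfolding sd_assoc_def by blast
  qed
qed

end


unbundle fps_syntax

lemma lfin_iff: "finite {n. f $$ n \<noteq> 0} \<longleftrightarrow> (\<exists>M. \<forall>n>M. f $$ n = 0)"
proof
  assume fin: "finite {n. f $$ n \<noteq> 0}"
  show "\<exists>M. \<forall>n>M. f $$ n = 0"
  proof (intro exI allI impI)
    fix n assume n: "n > Max (insert 0 {n. f $$ n \<noteq> 0})"
    show "f $$ n = 0"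
    proof (rule ccontr)
      assume "f $$ n \<noteq> 0"
      then have "n \<le> Max (insert 0 {n. f $$ n \<noteq> 0})" using fin by (intro Max_ge) auto
      then show False using n by simp
    qed
  qed
next
  assume "\<exists>M. \<forall>n>M. f $$ n = 0"
  then obtain M where M: "\<forall>n>M. f $$ n = 0" by blast
  have "{n. f $$ n \<noteq> 0} \<subseteq> {fls_subdegree f..M}"
  proof
    fix n assume "n \<in> {n. f $$ n \<noteq> 0}"
    then have "f $$ n \<noteq> 0" by simp
    then have "\<not> n < fls_subdegree f" "\<not> n > M" using M fls_eq0_below_subdegree by metis+
    then show "n \<in> {fls_subdegree f..M}" by simp
  qed
  then show "finite {n. f $$ n \<noteq> 0}" using finite_subset by blast
qed

definition LS :: "int \<Rightarrow> 'a::idom poly \<Rightarrow> 'a fls" where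
  "LS k p = fls_shift k (fps_to_fls (fps_of_poly p))"

definition PP :: "'a::idom fls \<Rightarrow> 'a poly" where
  "PP f = (SOME p. fps_of_poly p = fls_base_factor_to_fps f)"

lemma LS_nth: "LS k p $$ n = (if n + k < 0 then 0 else coeff p (nat (n + k)))"
  by (simp add: LS_def)

lemma LS_mult: "LS k p * LS m q = LS (k + m) (p * q)"
  unfolding LS_def by (simp add: fls_times_both_shifted_simp fls_times_fps_to_fls fps_of_poly_mult)

lemma LS_nz: "p \<noteq> 0 \<Longrightarrow> LS k p \<noteq> 0"
  unfolding LS_def using fps_of_poly_eq_iff[of p 0] by (simp add: fls_shift_eq0_iff)

lemma laurent_iff: "f \<in> laurent_semidomain S \<longleftrightarrow> (\<forall>n. f $$ n \<in> S) \<and> (\<exists>M. \<forall>n>M. f $$ n = 0)"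
  unfolding laurent_semidomain_def using lfin_iff by blast

context sdom
begin

unbundle fps_syntax

lemma laurent_sd: "semidomain (laurent_semidomain T)"
proof -
  have z: "0 \<in> laurent_semidomain T" unfolding laurent_iff using zero_in by simp
  have o: "1 \<in> laurent_semidomain T" unfolding laurent_iff using zero_in one_in by (auto intro: exI[of _ 0])
  have ab: "a + b \<in> laurent_semidomain T \<and> a * b \<in> laurent_semidomain T"
    if a: "a \<in> laurent_semidomain T" and b: "b \<in> laurent_semidomain T" for a b
  proof -
    obtain Ma Mb where Ma: "\<forall>n>Ma. a $$ n = 0" and Mb: "\<forall>n>Mb. b $$ n = 0"
      and aT: "\<forall>n. a $$ n \<in> T" and bT: "\<forall>n. b $$ n \<in> T" using a b unfolding laurent_iff by blast
    have "a + b \<in> laurent_semidomain T" unfolding laurent_iff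
      using aT bT Ma Mb add_in by (auto intro!: exI[of _ "max Ma Mb"])
    moreover have "(a * b) $$ n \<in> T" for n
      unfolding fls_times_nth(2) using aT bT by (intro sum_in) (auto intro: mult_in)
    moreover have "(a * b) $$ n = 0" if n: "n > Ma + Mb" for n
      unfolding fls_times_nth(2)
    proof (rule sum.neutral, intro ballI)
      fix i assume "i \<in> {fls_subdegree a..n - fls_subdegree b}"
      show "a $$ i * b $$ (n - i) = 0"
      proof (cases "i > Ma")
        case True then show ?thesis using Ma by simp
      next
        case False then have "n - i > Mb" using n by simp
        then show ?thesis using Mb by simp
      qed
    qed
    ultimately show ?thesis unfolding laurent_iff by blast
  qed
  show ?thesis unfolding semidomain_def using z o ab by blast
qed

lemma laurent_sdom: "sdom (laurent_semidomain T)"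
  by (rule sdom.intro) (rule laurent_sd)

lemma laurent_star_iff: "f \<in> sd_star (laurent_semidomain T) \<longleftrightarrow> f \<in> laurent_semidomain T \<and> f \<noteq> 0"
  by (simp add: sd_star_def)

lemma PP_ex:
  assumes "f \<in> laurent_semidomain T"
  shows "fps_of_poly (PP f) = fls_base_factor_to_fps f"
proof -
  obtain M where M: "\<forall>n>M. f $$ n = 0" using assms by (auto simp: laurent_iff)
  define K where "K = nat (M - fls_subdegree f)"
  have "fps_of_poly (truncate_fps (Suc K) (fls_base_factor_to_fps f)) = fls_base_factor_to_fps f"
  proof (subst fps_of_poly_truncate, rule fps_ext)
    fix i
    show "fps_cutoff (Suc K) (fls_base_factor_to_fps f) $ i = fls_base_factor_to_fps f $ i"
    proof (cases "i < Suc K")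
      case False
      then have "fls_subdegree f + int i > M" unfolding K_def by linarith
      then show ?thesis using False M by (simp add: fls_base_factor_to_fps_nth)
    qed simp
  qed
  then show ?thesis unfolding PP_def by (rule someI)
qed

lemma PP_coeff: "f \<in> laurent_semidomain T \<Longrightarrow> coeff (PP f) n = f $$ (fls_subdegree f + int n)"
  using PP_ex[of f] fps_of_poly_nth[of "PP f" n] fls_base_factor_to_fps_nth[of f n] by simp

lemma PP_in: "f \<in> laurent_semidomain T \<Longrightarrow> PP f \<in> poly_semidomain T"
  by (simp add: poly_semidomain_def PP_coeff laurent_iff)

lemma PP_nz: "f \<in> laurent_semidomain T \<Longrightarrow> f \<noteq> 0 \<Longrightarrow> PP f \<noteq> 0"
  using PP_coeff[of f 0] by auto

lemma PP_star: "f \<in> sd_star (laurent_semidomain T) \<Longrightarrow> PP f \<in> sd_star (poly_semidomain T)"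
  using PP_in PP_nz by (simp add: laurent_star_iff poly_star_iff)

lemma PP_mult:
  assumes "f \<in> laurent_semidomain T" "g \<in> laurent_semidomain T"
  shows "PP (f * g) = PP f * PP g"
proof -
  have fg: "f * g \<in> laurent_semidomain T" using assms sdom.mult_in[OF laurent_sdom] by blast
  have "fps_of_poly (PP (f * g)) = fps_of_poly (PP f) * fps_of_poly (PP g)"
    unfolding PP_ex[OF fg] PP_ex[OF assms(1)] PP_ex[OF assms(2)] by (rule fls_base_factor_to_fps_mult)
  then have "fps_of_poly (PP (f * g)) = fps_of_poly (PP f * PP g)" by (simp only: fps_of_poly_mult)
  then show ?thesis by (simp only: fps_of_poly_eq_iff)
qed

lemma PP_recon: "f \<in> laurent_semidomain T \<Longrightarrow> f = LS (- fls_subdegree f) (PP f)"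
  unfolding LS_def using PP_ex[of f] fls_conv_base_factor_to_fps_shift_subdegree[of f] by simp

lemma LS_in: "p \<in> poly_semidomain T \<Longrightarrow> LS k p \<in> laurent_semidomain T"
  unfolding laurent_iff
proof (intro conjI allI exI impI)
  assume p: "p \<in> poly_semidomain T"
  fix n show "LS k p $$ n \<in> T" using p zero_in by (simp add: LS_nth coeff_in)
next
  fix n assume "n > int (degree p) - k"
  then have "nat (n + k) > degree p" by linarith
  then show "LS k p $$ n = 0" by (simp add: LS_nth coeff_eq_0)
qed

end



context sdom
begin

definition lc :: "'a fls \<Rightarrow> 'a" where "lc f = f $$ fls_subdegree f"

lemma lc_mult: "f \<noteq> 0 \<Longrightarrow> g \<noteq> 0 \<Longrightarrow> lc (f * g) = lc f * lc g"
  unfolding lc_def by simp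

lemma lc_star: "f \<in> sd_star (laurent_semidomain T) \<Longrightarrow> lc f \<in> sd_star T"
  unfolding lc_def by (auto simp: laurent_star_iff star_iff laurent_iff)

lemma const_L_star: "c \<in> sd_star T \<Longrightarrow> fls_const c \<in> sd_star (laurent_semidomain T)"
proof -
  assume c: "c \<in> sd_star T"
  have "fls_const c \<in> laurent_semidomain T" unfolding laurent_iff
    using c zero_in by (auto simp: star_iff intro: exI[of _ 0])
  moreover have "fls_const c \<noteq> 0"
  proof
    assume "fls_const c = 0"
    then have "fls_const c $$ 0 = 0" by simp
    then show False using c by (simp add: star_iff)
  qed
  ultimately show ?thesis by (simp add: laurent_star_iff)
qed

lemma lc_const: "lc (fls_const c) = c"
  unfolding lc_def by simp

lemma L_dvd_lc: "sd_dvd (laurent_semidomain T) e f \<Longrightarrow> sd_dvd T (lc e) (lc f)"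
proof -
  assume "sd_dvd (laurent_semidomain T) e f"
  then obtain w where w: "w \<in> sd_star (laurent_semidomain T)" "f = e * w"
    and e: "e \<in> sd_star (laurent_semidomain T)" unfolding sd_dvd_def by blast
  have "lc f = lc e * lc w" using w e lc_mult by (simp add: laurent_star_iff)
  then show ?thesis by (rule dvdI[OF lc_star[OF e] lc_star[OF w(1)]])
qed

lemma fdiv_laurent_imp: "fdiv (laurent_semidomain T) \<Longrightarrow> fdiv T"
  unfolding fdiv_def
proof
  assume fp: "\<forall>a\<in>sd_star (laurent_semidomain T). \<exists>D. finite D \<and>
      (\<forall>d. sd_dvd (laurent_semidomain T) d a \<longrightarrow> (\<exists>e\<in>D. sd_assoc (laurent_semidomain T) d e))"
  fix a assume a: "a \<in> sd_star T"
  then obtain D' where D': "finite D'" "\<forall>d. sd_dvd (laurent_semidomain T) d (fls_const a) \<longrightarrow>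
      (\<exists>e\<in>D'. sd_assoc (laurent_semidomain T) d e)"
    using fp const_L_star by blast
  show "\<exists>D. finite D \<and> (\<forall>d. sd_dvd T d a \<longrightarrow> (\<exists>e\<in>D. sd_assoc T d e))"
  proof (intro exI[of _ "lc ` D'"] conjI allI impI)
    show "finite (lc ` D')" using D'(1) by simp
    fix d assume dA: "sd_dvd T d a"
    then obtain c where c: "c \<in> sd_star T" "a = d * c" "d \<in> sd_star T" by (auto simp: sd_dvd_def)
    have "fls_const a = fls_const d * fls_const c" using c(2) by (simp add: fls_const_mult_const)
    then have "sd_dvd (laurent_semidomain T) (fls_const d) (fls_const a)"
      by (rule sdom.dvdI[OF laurent_sdom const_L_star[OF c(3)] const_L_star[OF c(1)]])
    then obtain e where e: "e \<in> D'" "sd_assoc (laurent_semidomain T) (fls_const d) e" using D' by blast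
    then have "sd_dvd T (lc e) d" "sd_dvd T d (lc e)"
      using L_dvd_lc[of e "fls_const d"] L_dvd_lc[of "fls_const d" e] lc_const
      unfolding sd_assoc_def by auto
    then show "\<exists>e\<in>lc ` D'. sd_assoc T d e" using e(1) by (auto simp: sd_assoc_def)
  qed
qed

lemma laurent_key:
  assumes g1: "g1 \<in> sd_star (laurent_semidomain T)" and g2: "g2 \<in> sd_star (laurent_semidomain T)"
    and pd: "sd_dvd (poly_semidomain T) (PP g1) (PP g2)"
  shows "sd_dvd (laurent_semidomain T) g1 g2"
proof -
  obtain w where w: "w \<in> sd_star (poly_semidomain T)" "PP g2 = PP g1 * w"
    using pd unfolding sd_dvd_def by blast
  have g1L: "g1 \<in> laurent_semidomain T" and g2L: "g2 \<in> laurent_semidomain T"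
    using g1 g2 by (simp_all add: laurent_star_iff)
  define W where "W = LS (fls_subdegree g1 - fls_subdegree g2) w"
  have WS: "W \<in> sd_star (laurent_semidomain T)"
    unfolding W_def using w(1) LS_in LS_nz by (auto simp: laurent_star_iff poly_star_iff)
  have "g1 * W = LS (- fls_subdegree g1) (PP g1) * W" using PP_recon[OF g1L] by simp
  also have "\<dots> = LS (- fls_subdegree g2) (PP g1 * w)" unfolding W_def LS_mult by simp
  also have "\<dots> = g2" using PP_recon[OF g2L] w(2) by simp
  finally show ?thesis by (intro sdom.dvdI[OF laurent_sdom g1 WS]) simp
qed

lemma fdiv_laurent:
  assumes fd: "fdiv (poly_semidomain T)"
  shows "fdiv (laurent_semidomain T)"
proof (rule sdom.fdiv_keyI[OF laurent_sdom])
  let ?L = "laurent_semidomain T" and ?P = "poly_semidomain T"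
  fix f assume f: "f \<in> sd_star ?L"
  have P0: "PP f \<in> sd_star ?P" using PP_star[OF f] .
  obtain D where D: "finite D" "\<forall>e\<in>D. sd_dvd ?P e (PP f)" "\<forall>d. sd_dvd ?P d (PP f) \<longrightarrow> (\<exists>e\<in>D. sd_assoc ?P d e)"
    using sdom.fdiv_D[OF poly_sdom fd P0] by blast
  define rep where "rep d = (SOME e. e \<in> D \<and> sd_assoc ?P d e)" for d
  have rep: "rep d \<in> D \<and> sd_assoc ?P d (rep d)" if "sd_dvd ?P d (PP f)" for d
    unfolding rep_def using someI_ex[of "\<lambda>e. e \<in> D \<and> sd_assoc ?P d e"] D(3) that by blast
  have pdv: "sd_dvd ?P (PP g) (PP f) \<and> g \<in> sd_star ?L" if gd: "sd_dvd ?L g f" for g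
  proof -
    obtain h where h: "h \<in> sd_star ?L" "f = g * h" and g: "g \<in> sd_star ?L"
      using gd unfolding sd_dvd_def by blast
    have "PP f = PP g * PP h" using h g PP_mult by (simp add: laurent_star_iff)
    then have "sd_dvd ?P (PP g) (PP f)" by (rule sdom.dvdI[OF poly_sdom PP_star[OF g] PP_star[OF h(1)]])
    then show ?thesis using g by blast
  qed
  define \<phi> where "\<phi> g = rep (PP g)" for g
  show "\<exists>\<phi>::'a fls \<Rightarrow> 'a poly. finite (\<phi> ` {g. sd_dvd ?L g f}) \<and>
     (\<forall>d1 d2. sd_dvd ?L d1 f \<longrightarrow> sd_dvd ?L d2 f \<longrightarrow> \<phi> d1 = \<phi> d2 \<longrightarrow> sd_assoc ?L d1 d2)"
  proof (intro exI[of _ \<phi>] conjI allI impI)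
    have "\<phi> ` {g. sd_dvd ?L g f} \<subseteq> D" unfolding \<phi>_def using rep pdv by blast
    then show "finite (\<phi> ` {g. sd_dvd ?L g f})" using D(1) finite_subset by blast
    fix d1 d2 assume d: "sd_dvd ?L d1 f" "sd_dvd ?L d2 f" "\<phi> d1 = \<phi> d2"
    note f1 = pdv[OF d(1)] and f2 = pdv[OF d(2)]
    have a1: "sd_assoc ?P (PP d1) (rep (PP d2))" using rep[of "PP d1"] f1 d(3) unfolding \<phi>_def by simp
    have a2: "sd_assoc ?P (PP d2) (rep (PP d2))" using rep f2 by blast
    have la: "sd_assoc ?P (PP d1) (PP d2)"
      using sdom.assoc_trans[OF poly_sdom a1 sdom.assoc_sym[OF poly_sdom a2]] .
    then have "sd_dvd ?P (PP d1) (PP d2)" "sd_dvd ?P (PP d2) (PP d1)" unfolding sd_assoc_def by blast+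
    then show "sd_assoc ?L d1 d2" unfolding sd_assoc_def using laurent_key f1 f2 by blast
  qed
qed

end

theorem theorem4p4:
  fixes S :: "'a::idom set"
  assumes "semidomain S"
  shows "(FFS S \<longleftrightarrow> FFS (poly_semidomain S)) \<and>
         (FFS S \<longleftrightarrow> FFS (laurent_semidomain S))"
proof -
  interpret sdom S by (rule sdom.intro) (rule assms)
  have e1: "FFS S \<longleftrightarrow> fdiv S" by (rule FFS_iff_fdiv)
  have e2: "FFS (poly_semidomain S) \<longleftrightarrow> fdiv (poly_semidomain S)"
    by (rule sdom.FFS_iff_fdiv[OF poly_sdom])
  have e3: "FFS (laurent_semidomain S) \<longleftrightarrow> fdiv (laurent_semidomain S)"
    by (rule sdom.FFS_iff_fdiv[OF laurent_sdom])
  show ?thesis using e1 e2 e3 fdiv_poly fdiv_poly_imp fdiv_laurent fdiv_laurent_imp by blast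
qed


end
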